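(* Let $G$ be an ordered abelian group with smallest nonzero convex subgroup $A$, $H=G/A$, $\beta$ the cocycle of a transversal map, $L$ a valued field of characteristic $0$ with residue characteristic $p$, value group $A$ and cross-section $\sigma:A\to L^\times$, and $\delta$ an infinite cardinal. Let $\overline{\phi}\in\mathrm{Aut}(L)$ and let $\hat\phi_\beta$ be an automorphism of the ordered group $G_\beta$ of the form $\hat\phi_\beta(z,h)=(\hat\phi_1(z),\hat\phi_2(h))$ for maps $\hat\phi_1:A\to A$, $\hat\phi_2:H\to H$. If $\overline{\phi}\circ\sigma=\sigma\circ\hat\phi_1$, then the map $\phi:L(t^H,\beta)_\delta\to L(t^H,\beta)_\delta$, $\phi\left(\sum_{h\in S}a_ht^h\right)=\sum_{h\in S}\overline{\phi}(a_h)t^{\hat\phi_2(h)}$, is an automorphism of $L(t^H,\beta)_\delta$ as a valued field.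
   Context: $H$ has the order induced from $G$ and projection $\rho$. A transversal map is $\alpha:H\to G$ with $\rho\alpha=\mathrm{id}_H$, $\alpha(0)=0$, and $\beta(h,h')=\alpha(h+h')-\alpha(h)-\alpha(h')\in A$. $G_\beta$ is $A\times H$ with $(z,h)+(z',h')=(z+z'-\beta(h,h'),h+h')$ and lexicographic order ($(z,h)\le(z',h')$ iff $h<h'$, or $h=h'$ and $z\le z'$). A cross-section is a homomorphism $\sigma:A\to L^\times$ with $v(\sigma(a))=a$. $L(t^H,\beta)_\delta$ is the field of formal sums $\sum_{h\in S}a_ht^h$, $S\subseteq H$ well ordered, $|S|\le\delta$, $a_h\in L$, with coefficientwise addition, multiplication $\left(\sum a_ht^h\right)\left(\sum b_ht^h\right)=\sum_l\left(\sum_{h+h'=l}a_hb_{h'}\sigma(-\beta(h,h'))\right)t^l$, and valuation $val(\sum_{h\in S}a_ht^h)=(v(a_{h_0}),h_0)\in G_\beta$, $h_0=\min S$. *)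

theory Defs
  imports Main "HOL-Computational_Algebra.Primes"
begin

definition convex_subgroup :: "'g::linordered_ab_group_add set \<Rightarrow> bool" where
  "convex_subgroup B \<longleftrightarrow> 0 \<in> B \<and> (\<forall>x\<in>B. \<forall>y\<in>B. x + y \<in> B) \<and> (\<forall>x\<in>B. - x \<in> B)
     \<and> (\<forall>x\<in>B. \<forall>y\<in>B. \<forall>z. x \<le> z \<and> z \<le> y \<longrightarrow> z \<in> B)"

definition smallest_nonzero_convex_subgroup :: "'g::linordered_ab_group_add set \<Rightarrow> bool" where
  "smallest_nonzero_convex_subgroup A \<longleftrightarrow> convex_subgroup A \<and> A \<noteq> {0}
     \<and> (\<forall>B. convex_subgroup B \<and> B \<noteq> {0} \<longrightarrow> A \<subseteq> B)"

text \<open>H = G/A with the induced order, given through the projection rho: a surjective,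
  order-preserving group homomorphism with kernel A.\<close>
definition quotient_projection ::
  "'g::linordered_ab_group_add set \<Rightarrow> ('g \<Rightarrow> 'h::linordered_ab_group_add) \<Rightarrow> bool" where
  "quotient_projection A rho \<longleftrightarrow> (\<forall>x y. rho (x + y) = rho x + rho y) \<and> surj rho
     \<and> (\<forall>x. rho x = 0 \<longleftrightarrow> x \<in> A) \<and> (\<forall>x y. x \<le> y \<longrightarrow> rho x \<le> rho y)"

definition transversal :: "('g \<Rightarrow> 'h) \<Rightarrow> ('h::zero \<Rightarrow> 'g::zero) \<Rightarrow> bool" where
  "transversal rho alpha \<longleftrightarrow> (\<forall>h. rho (alpha h) = h) \<and> alpha 0 = 0"

definition cocycle :: "('h::plus \<Rightarrow> 'g::ab_group_add) \<Rightarrow> 'h \<Rightarrow> 'h \<Rightarrow> 'g" where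
  "cocycle alpha h h' = alpha (h + h') - alpha h - alpha h'"

definition gbeta_add :: "('h \<Rightarrow> 'h \<Rightarrow> 'g) \<Rightarrow> 'g \<times> 'h \<Rightarrow> 'g \<times> 'h \<Rightarrow> 'g::ab_group_add \<times> 'h::plus" where
  "gbeta_add beta x y = (fst x + fst y - beta (snd x) (snd y), snd x + snd y)"

definition gbeta_le :: "'g::order \<times> 'h::order \<Rightarrow> 'g \<times> 'h \<Rightarrow> bool" where
  "gbeta_le x y \<longleftrightarrow> snd x < snd y \<or> (snd x = snd y \<and> fst x \<le> fst y)"

definition gbeta_aut :: "'g::linordered_ab_group_add set \<Rightarrow> ('h \<Rightarrow> 'h \<Rightarrow> 'g)
     \<Rightarrow> ('g \<times> 'h \<Rightarrow> 'g \<times> 'h::linordered_ab_group_add) \<Rightarrow> bool" where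
  "gbeta_aut A beta psi \<longleftrightarrow> bij_betw psi (A \<times> UNIV) (A \<times> UNIV)
     \<and> (\<forall>x\<in>A \<times> UNIV. \<forall>y\<in>A \<times> UNIV. psi (gbeta_add beta x y) = gbeta_add beta (psi x) (psi y))
     \<and> (\<forall>x\<in>A \<times> UNIV. \<forall>y\<in>A \<times> UNIV. gbeta_le x y \<longleftrightarrow> gbeta_le (psi x) (psi y))"

text \<open>v is the valuation on nonzero elements (v 0 is irrelevant / stands for infinity).\<close>
definition valued_field :: "('l::field \<Rightarrow> 'g::linordered_ab_group_add) \<Rightarrow> 'g set \<Rightarrow> bool" where
  "valued_field v A \<longleftrightarrow>
     (\<forall>x y. x \<noteq> 0 \<longrightarrow> y \<noteq> 0 \<longrightarrow> v (x * y) = v x + v y)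
   \<and> (\<forall>x y. x \<noteq> 0 \<longrightarrow> y \<noteq> 0 \<longrightarrow> x + y \<noteq> 0 \<longrightarrow> min (v x) (v y) \<le> v (x + y))
   \<and> v ` (- {0}) = A"

definition residue_char :: "('l::field_char_0 \<Rightarrow> 'g::linordered_ab_group_add) \<Rightarrow> nat \<Rightarrow> bool" where
  "residue_char v p \<longleftrightarrow> (p = 0 \<and> (\<forall>n::nat. n > 0 \<longrightarrow> v (of_nat n) = 0))
     \<or> (prime p \<and> 0 < v (of_nat p))"

definition cross_section :: "('l::field \<Rightarrow> 'g::linordered_ab_group_add) \<Rightarrow> 'g set \<Rightarrow> ('g \<Rightarrow> 'l) \<Rightarrow> bool" where
  "cross_section v A sigma \<longleftrightarrow> (\<forall>a\<in>A. sigma a \<noteq> 0 \<and> v (sigma a) = a)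
     \<and> (\<forall>a\<in>A. \<forall>b\<in>A. sigma (a + b) = sigma a * sigma b)"

text \<open>Automorphism of L as a valued field: field automorphism preserving the valuation ring.\<close>
definition valued_field_aut :: "('l::field \<Rightarrow> 'g::linordered_ab_group_add) \<Rightarrow> ('l \<Rightarrow> 'l) \<Rightarrow> bool" where
  "valued_field_aut v f \<longleftrightarrow> bij f \<and> (\<forall>x y. f (x + y) = f x + f y) \<and> (\<forall>x y. f (x * y) = f x * f y)
     \<and> (\<forall>x. x \<noteq> 0 \<longrightarrow> (0 \<le> v x \<longleftrightarrow> 0 \<le> v (f x)))"

text \<open>A formal sum \<open>\<Sum>h\<in>S. a_h t^h\<close> is represented by its coefficient function.\<close>
definition hsupp :: "('h \<Rightarrow> 'l::zero) \<Rightarrow> 'h set" where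
  "hsupp f = {h. f h \<noteq> 0}"

definition well_ordered_set :: "'h::linorder set \<Rightarrow> bool" where
  "well_ordered_set S \<longleftrightarrow> (\<forall>T\<subseteq>S. T \<noteq> {} \<longrightarrow> (\<exists>m\<in>T. \<forall>x\<in>T. m \<le> x))"

text \<open>|S| \<le> |D|; the infinite cardinal delta is represented as |D| for an infinite set D.\<close>
definition card_le :: "'a set \<Rightarrow> 'd set \<Rightarrow> bool" where
  "card_le S D \<longleftrightarrow> (\<exists>g. inj_on g S \<and> g ` S \<subseteq> D)"

definition hahn_carrier :: "'d set \<Rightarrow> ('h::linorder \<Rightarrow> 'l::zero) set" where
  "hahn_carrier D = {f. well_ordered_set (hsupp f) \<and> card_le (hsupp f) D}"

definition hahn_add :: "('h \<Rightarrow> 'l::plus) \<Rightarrow> ('h \<Rightarrow> 'l) \<Rightarrow> 'h \<Rightarrow> 'l" where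
  "hahn_add f g = (\<lambda>h. f h + g h)"

definition hahn_mul :: "('g \<Rightarrow> 'l::field) \<Rightarrow> ('h \<Rightarrow> 'h \<Rightarrow> 'g::ab_group_add)
     \<Rightarrow> ('h::ab_group_add \<Rightarrow> 'l) \<Rightarrow> ('h \<Rightarrow> 'l) \<Rightarrow> 'h \<Rightarrow> 'l" where
  "hahn_mul sigma beta f g = (\<lambda>l. \<Sum>p\<in>{(h, h'). h + h' = l \<and> f h \<noteq> 0 \<and> g h' \<noteq> 0}.
        f (fst p) * g (snd p) * sigma (- beta (fst p) (snd p)))"

definition hahn_val :: "('l::zero \<Rightarrow> 'g) \<Rightarrow> ('h::linorder \<Rightarrow> 'l) \<Rightarrow> 'g \<times> 'h" where
  "hahn_val v f = (v (f (LEAST h. f h \<noteq> 0)), LEAST h. f h \<noteq> 0)"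

text \<open>Valuation ring membership: f = 0 (valuation infinity) or val f \<ge> (0,0) in G_beta.\<close>
definition hahn_val_nonneg :: "('l::zero \<Rightarrow> 'g::linordered_ab_group_add) \<Rightarrow> ('h::linordered_ab_group_add \<Rightarrow> 'l) \<Rightarrow> bool" where
  "hahn_val_nonneg v f \<longleftrightarrow> f = (\<lambda>_. 0) \<or> gbeta_le (0, 0) (hahn_val v f)"

definition hahn_valued_aut :: "('g \<Rightarrow> 'l::field) \<Rightarrow> ('h \<Rightarrow> 'h \<Rightarrow> 'g::linordered_ab_group_add)
     \<Rightarrow> ('l \<Rightarrow> 'g) \<Rightarrow> 'd set \<Rightarrow> (('h::linordered_ab_group_add \<Rightarrow> 'l) \<Rightarrow> ('h \<Rightarrow> 'l)) \<Rightarrow> bool" where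
  "hahn_valued_aut sigma beta v D phi \<longleftrightarrow>
     bij_betw phi (hahn_carrier D) (hahn_carrier D)
   \<and> (\<forall>x\<in>hahn_carrier D. \<forall>y\<in>hahn_carrier D. phi (hahn_add x y) = hahn_add (phi x) (phi y))
   \<and> (\<forall>x\<in>hahn_carrier D. \<forall>y\<in>hahn_carrier D.
         phi (hahn_mul sigma beta x y) = hahn_mul sigma beta (phi x) (phi y))
   \<and> (\<forall>x\<in>hahn_carrier D. hahn_val_nonneg v x \<longleftrightarrow> hahn_val_nonneg v (phi x))"

text \<open>The map \<open>\<Sum> a_h t^h \<mapsto> \<Sum> phibar(a_h) t^{phi2 h}\<close>: coefficient at k is phibar(a_h) where phi2 h = k
  (phi2 is bijective since the automorphism of G_beta is).\<close>
definition hahn_map :: "('l \<Rightarrow> 'l) \<Rightarrow> ('h \<Rightarrow> 'h) \<Rightarrow> ('h \<Rightarrow> 'l) \<Rightarrow> 'h \<Rightarrow> 'l" where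
  "hahn_map phibar phi2 f = (\<lambda>k. phibar (f (inv phi2 k)))"

end

theory Submission
  imports Defs
begin

lemma carrier_pre:
  fixes q :: "'h::linorder \<Rightarrow> 'h"
  assumes sm: "strict_mono q" and c0: "\<And>x. c x = 0 \<longleftrightarrow> x = 0"
    and f: "f \<in> hahn_carrier D"
  shows "(\<lambda>k. c (f (q k))) \<in> hahn_carrier D"
proof -
  have hs: "hsupp (\<lambda>k. c (f (q k))) = q -` hsupp f"
    by (auto simp: hsupp_def c0)
  have wo: "well_ordered_set (hsupp f)" and cl: "card_le (hsupp f) D"
    using f by (auto simp: hahn_carrier_def)
  have "well_ordered_set (q -` hsupp f)"
    unfolding well_ordered_set_def
  proof (intro allI impI)
    fix T assume T: "T \<subseteq> q -` hsupp f" "T \<noteq> {}"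
    then have "q ` T \<subseteq> hsupp f" "q ` T \<noteq> {}" by auto
    then obtain m where m: "m \<in> q ` T" "\<forall>x\<in>q ` T. m \<le> x"
      using wo unfolding well_ordered_set_def by blast
    then obtain t where t: "t \<in> T" "m = q t" by auto
    have "\<forall>x\<in>T. t \<le> x"
      using m t sm by (metis image_eqI strict_mono_less_eq)
    then show "\<exists>m\<in>T. \<forall>x\<in>T. m \<le> x" using t by blast
  qed
  moreover have "card_le (q -` hsupp f) D"
  proof -
    obtain g where g: "inj_on g (hsupp f)" "g ` hsupp f \<subseteq> D"
      using cl unfolding card_le_def by blast
    have "inj_on (g \<circ> q) (q -` hsupp f)"
      using g(1) strict_mono_imp_inj_on[OF sm, of UNIV]
      unfolding inj_on_def by auto
    moreover have "(g \<circ> q) ` (q -` hsupp f) \<subseteq> D" using g(2) by auto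
    ultimately show ?thesis unfolding card_le_def by blast
  qed
  ultimately show ?thesis using hs by (simp add: hahn_carrier_def)
qed

lemma add_sum_hom:
  assumes add: "\<And>x y. f (x + y) = f x + f y" and z: "f 0 = (0::'b::comm_monoid_add)"
  shows "f (sum g S) = sum (\<lambda>x. f (g x)) (S::'c set)"
proof (cases "finite S")
  case True
  then show ?thesis by (induction S rule: finite_induct) (auto simp: add z)
next
  case False
  then show ?thesis by (simp add: z)
qed

theorem lemma5p2:
  fixes A :: "'g::linordered_ab_group_add set"
    and rho :: "'g \<Rightarrow> 'h::linordered_ab_group_add"
    and alpha :: "'h \<Rightarrow> 'g"
    and v :: "'l::field_char_0 \<Rightarrow> 'g"
    and p :: nat
    and sigma :: "'g \<Rightarrow> 'l"
    and D :: "'d set"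
    and phibar :: "'l \<Rightarrow> 'l"
    and phi1 :: "'g \<Rightarrow> 'g"
    and phi2 :: "'h \<Rightarrow> 'h"
  assumes "smallest_nonzero_convex_subgroup A"
    and "quotient_projection A rho"
    and "transversal rho alpha"
    and "valued_field v A"
    and "residue_char v p"
    and "cross_section v A sigma"
    and "infinite D"
    and "valued_field_aut v phibar"
    and "\<forall>z\<in>A. phi1 z \<in> A"
    and "gbeta_aut A (cocycle alpha) (\<lambda>(z, h). (phi1 z, phi2 h))"
    and "\<forall>z\<in>A. phibar (sigma z) = sigma (phi1 z)"
  shows "hahn_valued_aut sigma (cocycle alpha) v D (hahn_map phibar phi2)"
proof -
  define beta where "beta = cocycle alpha"
  define psi where "psi = (\<lambda>(z::'g, h::'h). (phi1 z, phi2 h))"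
  have rhoadd: "\<And>x y. rho (x + y) = rho x + rho y" and rhoA: "\<And>x. rho x = 0 \<longleftrightarrow> x \<in> A"
    using assms(2) unfolding quotient_projection_def by auto
  have rho0: "rho 0 = 0" using rhoadd[of 0 0] by simp
  have rhoneg: "rho (- x) = - rho x" for x
    using rhoadd[of x "-x"] rho0 by (simp add: eq_neg_iff_add_eq_0 add.commute)
  have A0: "0 \<in> A" using rho0 rhoA by blast
  have ra: "rho (alpha h) = h" and a0: "alpha 0 = 0" for h
    using assms(3) unfolding transversal_def by auto
  have rhodiff: "rho (x - y) = rho x - rho y" for x y
    using rhoadd[of "x - y" y] by (simp add: eq_diff_eq)
  have betaA: "- beta h h' \<in> A" for h h'
  proof -
    have "rho (beta h h') = 0"
      unfolding beta_def cocycle_def rhodiff ra by simp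
    then have "rho (- beta h h') = 0" by (simp add: rhoneg)
    then show ?thesis using rhoA by blast
  qed
  have b00: "beta 0 0 = 0" by (simp add: beta_def cocycle_def a0)
  have bij: "bij_betw psi (A \<times> UNIV) (A \<times> UNIV)"
   and padd: "\<And>x y. x \<in> A \<times> UNIV \<Longrightarrow> y \<in> A \<times> UNIV \<Longrightarrow>
        psi (gbeta_add beta x y) = gbeta_add beta (psi x) (psi y)"
   and ple: "\<And>x y. x \<in> A \<times> UNIV \<Longrightarrow> y \<in> A \<times> UNIV \<Longrightarrow> gbeta_le x y \<longleftrightarrow> gbeta_le (psi x) (psi y)"
    using assms(10) unfolding gbeta_aut_def psi_def beta_def by auto
  have key: "phi1 (- beta h h') = phi1 0 + phi1 0 - beta (phi2 h) (phi2 h')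
      \<and> phi2 (h + h') = phi2 h + phi2 h'" for h h'
    using padd[of "(0,h)" "(0,h')"] A0 by (simp add: psi_def gbeta_add_def)
  have phi2add: "phi2 (h + h') = phi2 h + phi2 h'" for h h' using key by blast
  have phi20: "phi2 0 = 0" using phi2add[of 0 0] by simp
  have phi10: "phi1 0 = 0" using key[of 0 0] b00 phi20 by simp
  have phi1b: "phi1 (- beta h h') = - beta (phi2 h) (phi2 h')" for h h'
    using key[of h h'] phi10 by simp
  have sb: "phibar (sigma (- beta h h')) = sigma (- beta (phi2 h) (phi2 h'))" for h h'
    using assms(11) betaA phi1b by metis
  have inj2: "inj phi2"
  proof (rule injI)
    fix x y assume "phi2 x = phi2 y"
    then have "psi (0, x) = psi (0, y)" by (simp add: psi_def)
    then show "x = y" using bij A0 unfolding bij_betw_def inj_on_def by blast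
  qed
  have surj2: "surj phi2"
  proof -
    { fix k
      have "(0, k) \<in> psi ` (A \<times> UNIV)" using bij A0 unfolding bij_betw_def by auto
      then have "k \<in> range phi2" by (auto simp: psi_def) }
    then show ?thesis by auto
  qed
  have bij2: "bij phi2" using inj2 surj2 by (simp add: bij_def)
  have sm2: "strict_mono phi2"
  proof (rule strict_monoI)
    fix x y :: 'h assume xy: "x < y"
    then have "gbeta_le (0, x) (0, y)" by (simp add: gbeta_le_def)
    then have "gbeta_le (psi (0, x)) (psi (0, y))" using ple A0 by blast
    then have "phi2 x < phi2 y \<or> phi2 x = phi2 y" by (simp add: psi_def gbeta_le_def)
    then show "phi2 x < phi2 y" using inj2 xy by (auto dest: injD)
  qed
  have smi: "strict_mono (inv phi2)"
  proof (rule strict_monoI)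
    fix x y :: 'h assume xy: "x < y"
    have "phi2 (inv phi2 x) = x" "phi2 (inv phi2 y) = y" using bij2 by (auto simp: bij_is_surj surj_f_inv_f)
    then show "inv phi2 x < inv phi2 y" using xy sm2
      by (metis linorder_not_le strict_mono_less_eq)
  qed
  have invc: "inv phi2 (phi2 h) = h" for h using inj2 by simp
  have cinv: "phi2 (inv phi2 k) = k" for k using surj2 by (simp add: surj_f_inv_f)
  have pb: "bij phibar" and pbadd: "\<And>x y. phibar (x + y) = phibar x + phibar y"
    and pbmul: "\<And>x y. phibar (x * y) = phibar x * phibar y"
    and pbv: "\<And>x. x \<noteq> 0 \<Longrightarrow> (0 \<le> v x \<longleftrightarrow> 0 \<le> v (phibar x))"
    using assms(8) unfolding valued_field_aut_def by auto
  have pb0: "phibar 0 = 0" using pbadd[of 0 0] by simp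
  have pbz: "phibar x = 0 \<longleftrightarrow> x = 0" for x
    using pb pb0 by (metis bij_is_inj injD)
  have ipbz: "inv phibar x = 0 \<longleftrightarrow> x = 0" for x
    using pb pb0 pbz by (metis bij_inv_eq_iff)
  define F where "F = hahn_map phibar phi2"
  have Fapp: "F f k = phibar (f (inv phi2 k))" for f k by (simp add: F_def hahn_map_def)
  have Fapp2: "F f (phi2 h) = phibar (f h)" for f h by (simp add: Fapp invc)
  have Fin: "F f \<in> hahn_carrier D" if "f \<in> hahn_carrier D" for f
    unfolding F_def hahn_map_def using carrier_pre[OF smi pbz that] .
  have bijF: "bij_betw F (hahn_carrier D) (hahn_carrier D)"
  proof (rule bij_betw_imageI)
    show "inj_on F (hahn_carrier D)"
    proof (rule inj_onI)
      fix x y assume "F x = F y"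
      then have "phibar (x h) = phibar (y h)" for h using Fapp2 by metis
      then show "x = y" using pb by (auto simp: bij_def inj_def)
    qed
    show "F ` hahn_carrier D = hahn_carrier D"
    proof
      show "F ` hahn_carrier D \<subseteq> hahn_carrier D" using Fin by auto
      show "hahn_carrier D \<subseteq> F ` hahn_carrier D"
      proof
        fix g :: "'h \<Rightarrow> 'l" assume g: "g \<in> hahn_carrier D"
        define f where "f = (\<lambda>h. inv phibar (g (phi2 h)))"
        have "f \<in> hahn_carrier D" unfolding f_def using carrier_pre[OF sm2 ipbz g] .
        moreover have "F f = g"
          by (rule ext) (simp add: Fapp f_def cinv pb bij_is_surj surj_f_inv_f)
        ultimately show "g \<in> F ` hahn_carrier D" by blast
      qed
    qed
  qed
  have addF: "F (hahn_add x y) = hahn_add (F x) (F y)" for x y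
    by (simp add: F_def hahn_map_def hahn_add_def pbadd)
  have mulF: "F (hahn_mul sigma beta x y) = hahn_mul sigma beta (F x) (F y)" for x y
  proof (rule ext)
    fix k
    define l where "l = inv phi2 k"
    have kl: "k = phi2 l" by (simp add: l_def cinv)
    define P where "P = {(h, h'). h + h' = l \<and> x h \<noteq> 0 \<and> y h' \<noteq> 0}"
    define Q where "Q = {(h, h'). h + h' = k \<and> F x h \<noteq> 0 \<and> F y h' \<noteq> 0}"
    have QP: "Q = map_prod phi2 phi2 ` P"
    proof
      show "Q \<subseteq> map_prod phi2 phi2 ` P"
      proof
        fix q assume "q \<in> Q"
        then obtain j j' where q: "q = (j, j')" "j + j' = k" "F x j \<noteq> 0" "F y j' \<noteq> 0"
          unfolding Q_def by auto
        have "inv phi2 j + inv phi2 j' = l"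
          using q(2) kl phi2add cinv inj2 by (metis injD)
        then have "(inv phi2 j, inv phi2 j') \<in> P" using q by (simp add: P_def Fapp pbz)
        moreover have "q = map_prod phi2 phi2 (inv phi2 j, inv phi2 j')" by (simp add: q cinv)
        ultimately show "q \<in> map_prod phi2 phi2 ` P" by blast
      qed
      show "map_prod phi2 phi2 ` P \<subseteq> Q"
        by (auto simp: P_def Q_def Fapp2 pbz kl phi2add)
    qed
    have injP: "inj_on (map_prod phi2 phi2) P"
      using inj2 by (auto simp: inj_on_def dest: injD)
    have "hahn_mul sigma beta (F x) (F y) k
        = (\<Sum>q\<in>Q. F x (fst q) * F y (snd q) * sigma (- beta (fst q) (snd q)))"
      by (simp add: hahn_mul_def Q_def)
    also have "\<dots> = (\<Sum>q\<in>P. F x (phi2 (fst q)) * F y (phi2 (snd q)) * sigma (- beta (phi2 (fst q)) (phi2 (snd q))))"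
      unfolding QP by (subst sum.reindex[OF injP]) (simp add: case_prod_beta)
    also have "\<dots> = (\<Sum>q\<in>P. phibar (x (fst q) * y (snd q) * sigma (- beta (fst q) (snd q))))"
      by (rule sum.cong) (auto simp: Fapp2 pbmul sb)
    also have "\<dots> = phibar (\<Sum>q\<in>P. x (fst q) * y (snd q) * sigma (- beta (fst q) (snd q)))"
      by (rule add_sum_hom[symmetric, OF pbadd pb0])
    also have "\<dots> = F (hahn_mul sigma beta x y) k"
      by (simp add: Fapp hahn_mul_def P_def l_def)
    finally show "F (hahn_mul sigma beta x y) k = hahn_mul sigma beta (F x) (F y) k" by simp
  qed
  have valF: "hahn_val_nonneg v x \<longleftrightarrow> hahn_val_nonneg v (F x)" if xC: "x \<in> hahn_carrier D" for x
  proof (cases "x = (\<lambda>_. 0)")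
    case True
    then have "F x = (\<lambda>_. 0)" by (simp add: Fapp pb0 fun_eq_iff)
    then show ?thesis using True by (simp add: hahn_val_nonneg_def)
  next
    case False
    then have ne: "hsupp x \<noteq> {}" by (auto simp: hsupp_def)
    have "well_ordered_set (hsupp x)" using xC by (simp add: hahn_carrier_def)
    then obtain m where "m \<in> hsupp x" "\<forall>h\<in>hsupp x. m \<le> h"
      using ne unfolding well_ordered_set_def by (meson order_refl)
    then have m: "x m \<noteq> 0" "\<And>h. x h \<noteq> 0 \<Longrightarrow> m \<le> h"
      by (auto simp: hsupp_def)
    have L1: "(LEAST h. x h \<noteq> 0) = m" by (rule Least_equality) (use m in auto)
    have L2: "(LEAST h. F x h \<noteq> 0) = phi2 m"
    proof (rule Least_equality)
      show "F x (phi2 m) \<noteq> 0" using m by (simp add: Fapp2 pbz)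
      fix k assume "F x k \<noteq> 0"
      then have "m \<le> inv phi2 k" using m by (simp add: Fapp pbz)
      then have "phi2 m \<le> phi2 (inv phi2 k)" by (simp add: strict_mono_less_eq[OF sm2])
      then show "phi2 m \<le> k" by (simp add: cinv)
    qed
    have "F x (phi2 m) \<noteq> 0" by (simp add: Fapp2 pbz m)
    then have Fne: "F x \<noteq> (\<lambda>_. 0)" by auto
    have "0 < m \<longleftrightarrow> phi2 0 < phi2 m" by (simp add: strict_mono_less[OF sm2])
    then have e1: "0 < m \<longleftrightarrow> 0 < phi2 m" by (simp add: phi20)
    have "m = 0 \<longleftrightarrow> phi2 m = phi2 0" by (simp add: inj_eq[OF inj2])
    then have e2: "m = 0 \<longleftrightarrow> phi2 m = 0" by (simp add: phi20)
    show ?thesis using False Fne pbv[OF m(1)] e1 e2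
      by (auto simp: hahn_val_nonneg_def hahn_val_def L1 L2 gbeta_le_def Fapp2)
  qed
  show ?thesis
    unfolding hahn_valued_aut_def F_def[symmetric] beta_def[symmetric]
    using bijF addF mulF valF by blast
qed

end
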